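(* Let $K$ be a field, $S=K[x_1,\dots,x_n]$, $A\subseteq\{1,\dots,n\}$, $f=\prod_{j\in A}x_j$, let $J\subset I\subset S_f$ be monomial ideals, and let $t_1,\dots,t_r$ be new variables. Then $$\operatorname{sdepth}(I/J)[t_1^{\pm1},\dots,t_r^{\pm1}]=\operatorname{sdepth}(I/J)+r.$$
   Context: $S_f=K[x_1,\dots,x_n,x_j^{-1}:j\in A]$, with $K$-basis the monomials $x_1^{a_1}\cdots x_n^{a_n}$, $a_j\in\mathbb Z$ for $j\in A$, $a_j\in\mathbb N$ otherwise; monomial ideals are ideals generated by monomials, and $I/J$ has $K$-basis the monomials in $I\setminus J$. A Stanley space of $I/J$ is $uK[Z]$, the $K$-span of all $uw$ ($w$ a monomial in elements of $Z$), where $u\in I\setminus J$ is a monomial, $Z$ a subset of the variables and of the inverses of the inverted variables containing no pair $\{x_j,x_j^{-1}\}$, and $uK[Z]$ is a free $K[Z]$-submodule of $I/J$; its dimension is $|Z|$. Stanley decompositions are finite direct sums of Stanley spaces equal to $I/J$; $\operatorname{sdepth}$ of a decomposition is the minimal dimension of its spaces, and $\operatorname{sdepth}(I/J)$ the maximum over all decompositions. $(I/J)[t_1^{\pm1},\dots,t_r^{\pm1}]=IT/JT$ where $T=S_f[t_1^{\pm1},\dots,t_r^{\pm1}]$, the localization of $K[x_1,\dots,x_n,t_1,\dots,t_r]$ at $f t_1\cdots t_r$, with Stanley depth defined in the same way. *)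

theory Defs
  imports Main "HOL-Library.Extended_Nat"
begin

text \<open>Monomials of S_f = K[x_0,...,x_(n-1), x_j^-1 : j in A] are represented by their
exponent vectors (nat => int), supported on {0..<n}; exponents of non-inverted
variables are nonnegative.  A monomial ideal of S_f is represented by its set of
monomials (which determines it and forms a K-basis of it); the field K plays no role.\<close>

definition lmonos :: "nat \<Rightarrow> nat set \<Rightarrow> (nat \<Rightarrow> int) set" where
  "lmonos n A = {a. (\<forall>j. n \<le> j \<longrightarrow> a j = 0) \<and> (\<forall>j<n. j \<notin> A \<longrightarrow> 0 \<le> a j)}"

definition mono_ideal :: "nat \<Rightarrow> nat set \<Rightarrow> (nat \<Rightarrow> int) set \<Rightarrow> bool" where
  "mono_ideal n A I \<longleftrightarrow> I \<subseteq> lmonos n A \<and>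
     (\<forall>u\<in>I. \<forall>v\<in>lmonos n A. (\<lambda>i. u i + v i) \<in> I)"

text \<open>Admissible sets Z: (j,True) stands for x_j, (j,False) for x_j^-1 (only for j in A);
no pair {x_j, x_j^-1}.\<close>

definition stanley_dirs :: "nat \<Rightarrow> nat set \<Rightarrow> (nat \<times> bool) set \<Rightarrow> bool" where
  "stanley_dirs n A Z \<longleftrightarrow> Z \<subseteq> {(j, b). j < n \<and> (b \<or> j \<in> A)} \<and>
     \<not> (\<exists>j. (j, True) \<in> Z \<and> (j, False) \<in> Z)"

definition dir :: "nat \<times> bool \<Rightarrow> nat \<Rightarrow> int" where
  "dir z = (\<lambda>i. if i = fst z then (if snd z then 1 else -1) else 0)"

text \<open>The monomials u*w, w a monomial in the elements of Z (a K-basis of uK[Z]).\<close>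

definition sspace :: "(nat \<Rightarrow> int) \<Rightarrow> (nat \<times> bool) set \<Rightarrow> (nat \<Rightarrow> int) set" where
  "sspace u Z = {(\<lambda>i. u i + (\<Sum>z\<in>Z. int (c z) * dir z i)) | c :: nat \<times> bool \<Rightarrow> nat. True}"

text \<open>uK[Z] is a Stanley space of I/J: u a monomial in I \ J, Z admissible, and uK[Z]
a free K[Z]-submodule of I/J, i.e. no u*w lies in J (distinct w give distinct u*w
automatically, and u*w lies in I since I is an ideal).\<close>

definition is_stanley_space ::
  "nat \<Rightarrow> nat set \<Rightarrow> (nat \<Rightarrow> int) set \<Rightarrow> (nat \<Rightarrow> int) set \<Rightarrow> (nat \<Rightarrow> int) \<Rightarrow> (nat \<times> bool) set \<Rightarrow> bool" where
  "is_stanley_space n A I J u Z \<longleftrightarrow> u \<in> I - J \<and> stanley_dirs n A Z \<and> sspace u Z \<subseteq> I - J"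

text \<open>A Stanley decomposition: finitely many Stanley spaces whose sum is direct and equals I/J;
for monomial subspaces this means their monomial sets partition I \ J.\<close>

definition stanley_decomp ::
  "nat \<Rightarrow> nat set \<Rightarrow> (nat \<Rightarrow> int) set \<Rightarrow> (nat \<Rightarrow> int) set \<Rightarrow> ((nat \<Rightarrow> int) \<times> (nat \<times> bool) set) set \<Rightarrow> bool" where
  "stanley_decomp n A I J D \<longleftrightarrow> finite D \<and>
     (\<forall>(u, Z)\<in>D. is_stanley_space n A I J u Z) \<and>
     (\<forall>p\<in>D. \<forall>q\<in>D. p \<noteq> q \<longrightarrow> sspace (fst p) (snd p) \<inter> sspace (fst q) (snd q) = {}) \<and>
     (\<Union>(u, Z)\<in>D. sspace u Z) = I - J"

definition sdepth_decomp :: "((nat \<Rightarrow> int) \<times> (nat \<times> bool) set) set \<Rightarrow> nat" where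
  "sdepth_decomp D = Min ((\<lambda>(u, Z). card Z) ` D)"

definition sdepth :: "nat \<Rightarrow> nat set \<Rightarrow> (nat \<Rightarrow> int) set \<Rightarrow> (nat \<Rightarrow> int) set \<Rightarrow> enat" where
  "sdepth n A I J = (SUP D \<in> {D. stanley_decomp n A I J D}. enat (sdepth_decomp D))"

text \<open>Extension IT of a monomial ideal I of S_f to T = S_f[t_1^{+-1},...,t_r^{+-1}], where
the t's are the variables n..n+r-1 and are inverted: the ideal of T generated by I.\<close>

definition laurent_vars :: "nat \<Rightarrow> nat set \<Rightarrow> nat \<Rightarrow> nat set" where
  "laurent_vars n A r = A \<union> {n..<n + r}"

definition ext_ideal :: "nat \<Rightarrow> nat set \<Rightarrow> nat \<Rightarrow> (nat \<Rightarrow> int) set \<Rightarrow> (nat \<Rightarrow> int) set" where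
  "ext_ideal n A r I = {v. \<exists>u\<in>I. \<exists>w\<in>lmonos (n + r) (laurent_vars n A r). v = (\<lambda>i. u i + w i)}"

end

theory Submission
  imports Defs
begin

definition nopair :: "(nat \<times> bool) set \<Rightarrow> bool" where
  "nopair Z \<longleftrightarrow> (\<forall>j. \<not> ((j, True) \<in> Z \<and> (j, False) \<in> Z))"

lemma sum_dir:
  assumes "finite Z"
  shows "(\<Sum>z\<in>Z. int (c z) * dir z i) =
    (if (i,True)\<in>Z then int (c (i,True)) else 0) - (if (i,False)\<in>Z then int (c (i,False)) else 0)"
proof -
  have "(\<Sum>z\<in>Z. int (c z) * dir z i) = (\<Sum>z\<in>Z \<inter> {(i,True),(i,False)}. int (c z) * dir z i)"
    by (rule sum.mono_neutral_right) (use assms in \<open>auto simp: dir_def\<close>)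
  also have "\<dots> = (if (i,True)\<in>Z then int (c (i,True)) else 0) - (if (i,False)\<in>Z then int (c (i,False)) else 0)"
  proof (cases "(i,True)\<in>Z"; cases "(i,False)\<in>Z")
    assume a: "(i,True)\<in>Z" "(i,False)\<in>Z"
    then have "Z \<inter> {(i,True),(i,False)} = {(i,True),(i,False)}" by auto
    then show ?thesis using a by (simp add: dir_def)
  next
    assume a: "(i,True)\<in>Z" "(i,False)\<notin>Z"
    then have "Z \<inter> {(i,True),(i,False)} = {(i,True)}" by auto
    then show ?thesis using a by (simp add: dir_def)
  next
    assume a: "(i,True)\<notin>Z" "(i,False)\<in>Z"
    then have "Z \<inter> {(i,True),(i,False)} = {(i,False)}" by auto
    then show ?thesis using a by (simp add: dir_def)
  next
    assume a: "(i,True)\<notin>Z" "(i,False)\<notin>Z"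
    then have "Z \<inter> {(i,True),(i,False)} = {}" by auto
    then show ?thesis using a by (simp add: dir_def)
  qed
  finally show ?thesis .
qed

definition inbox :: "(nat \<Rightarrow> int) \<Rightarrow> (nat \<times> bool) set \<Rightarrow> (nat \<Rightarrow> int) \<Rightarrow> bool" where
  "inbox u Z v \<longleftrightarrow> (\<forall>i. ((i,True)\<in>Z \<longrightarrow> u i \<le> v i) \<and> ((i,False)\<in>Z \<longrightarrow> v i \<le> u i) \<and>
      ((i,True)\<notin>Z \<longrightarrow> (i,False)\<notin>Z \<longrightarrow> v i = u i))"

lemma sspace_box:
  assumes "finite Z" "nopair Z"
  shows "v \<in> sspace u Z \<longleftrightarrow> inbox u Z v"
proof
  assume "v \<in> sspace u Z"
  then obtain c where v: "v = (\<lambda>i. u i + (\<Sum>z\<in>Z. int (c z) * dir z i))"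
    unfolding sspace_def by auto
  show "inbox u Z v" unfolding inbox_def v sum_dir[OF assms(1)] using assms(2)
    by (auto simp: nopair_def)
next
  assume b: "inbox u Z v"
  define c where "c z = (if snd z then nat (v (fst z) - u (fst z)) else nat (u (fst z) - v (fst z)))" for z
  have "v = (\<lambda>i. u i + (\<Sum>z\<in>Z. int (c z) * dir z i))"
  proof
    fix i show "v i = u i + (\<Sum>z\<in>Z. int (c z) * dir z i)"
      unfolding sum_dir[OF assms(1)] using b assms(2) unfolding inbox_def nopair_def c_def
      by (cases "(i,True)\<in>Z"; cases "(i,False)\<in>Z"; force)
  qed
  then show "v \<in> sspace u Z" unfolding sspace_def by blast
qed

lemma stanley_dirs_finite: "stanley_dirs n A Z \<Longrightarrow> finite Z"
  unfolding stanley_dirs_def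
  by (rule finite_subset[of _ "{..<n} \<times> UNIV"]) auto

lemma stanley_dirs_nopair: "stanley_dirs n A Z \<Longrightarrow> nopair Z"
  unfolding stanley_dirs_def nopair_def by auto

lemma stanley_dirs_card: "stanley_dirs n A Z \<Longrightarrow> card Z \<le> n"
proof -
  assume s: "stanley_dirs n A Z"
  have "inj_on fst Z"
  proof (rule inj_onI)
    fix x y assume "x \<in> Z" "y \<in> Z" "fst x = fst y"
    then show "x = y" using s unfolding stanley_dirs_def
      by (metis (full_types) prod.collapse)
  qed
  then have "card Z = card (fst ` Z)" by (simp add: card_image)
  also have "\<dots> \<le> card {..<n}"
    by (rule card_mono) (use s in \<open>auto simp: stanley_dirs_def\<close>)
  finally show ?thesis by simp
qed

lemma u_in_sspace: "u \<in> sspace u Z"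
  unfolding sspace_def by (rule CollectI, rule exI[of _ "\<lambda>_. 0"]) simp

lemma lmonos_add: "a \<in> lmonos n A \<Longrightarrow> b \<in> lmonos n A \<Longrightarrow> (\<lambda>i. a i + b i) \<in> lmonos n A"
  unfolding lmonos_def by auto

lemma lmonos_zero: "(\<lambda>_. 0) \<in> lmonos n A"
  unfolding lmonos_def by auto

lemma lmonos_above: "a \<in> lmonos n A \<Longrightarrow> n \<le> j \<Longrightarrow> a j = 0"
  unfolding lmonos_def by auto

definition trunc :: "nat \<Rightarrow> (nat \<Rightarrow> int) \<Rightarrow> (nat \<Rightarrow> int)" where
  "trunc n v = (\<lambda>i. if i < n then v i else 0)"

lemma ext_char:
  assumes "A \<subseteq> {..<n}" "mono_ideal n A I"
  shows "ext_ideal n A r I = {v \<in> lmonos (n+r) (laurent_vars n A r). trunc n v \<in> I}"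
proof (intro set_eqI iffI)
  fix v assume "v \<in> ext_ideal n A r I"
  then obtain u w where u: "u \<in> I" and w: "w \<in> lmonos (n + r) (laurent_vars n A r)"
    and v: "v = (\<lambda>i. u i + w i)" unfolding ext_ideal_def by blast
  have ul: "u \<in> lmonos n A" using u assms(2) unfolding mono_ideal_def by auto
  have "v \<in> lmonos (n+r) (laurent_vars n A r)"
    using ul w unfolding v lmonos_def laurent_vars_def by auto
  moreover have "trunc n w \<in> lmonos n A"
    using w unfolding lmonos_def laurent_vars_def trunc_def by auto
  then have "(\<lambda>i. u i + trunc n w i) \<in> I" using u assms(2) unfolding mono_ideal_def by auto
  moreover have "trunc n v = (\<lambda>i. u i + trunc n w i)"
    using ul unfolding v trunc_def lmonos_def by auto
  ultimately show "v \<in> {v \<in> lmonos (n+r) (laurent_vars n A r). trunc n v \<in> I}" by simp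
next
  fix v assume a: "v \<in> {v \<in> lmonos (n+r) (laurent_vars n A r). trunc n v \<in> I}"
  define w where "w = (\<lambda>i. if i < n then 0 else v i)"
  have "w \<in> lmonos (n + r) (laurent_vars n A r)"
    using a unfolding w_def lmonos_def laurent_vars_def by auto
  moreover have "v = (\<lambda>i. trunc n v i + w i)" unfolding w_def trunc_def by auto
  ultimately show "v \<in> ext_ideal n A r I" using a unfolding ext_ideal_def by blast
qed

definition decomp :: "nat \<Rightarrow> nat set \<Rightarrow> (nat \<Rightarrow> int) set \<Rightarrow> ((nat \<Rightarrow> int) \<times> (nat \<times> bool) set) set \<Rightarrow> bool" where
  "decomp n A M D \<longleftrightarrow> finite D \<and>
     (\<forall>p\<in>D. stanley_dirs n A (snd p) \<and> sspace (fst p) (snd p) \<subseteq> M) \<and>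
     (\<forall>p\<in>D. \<forall>q\<in>D. p \<noteq> q \<longrightarrow> sspace (fst p) (snd p) \<inter> sspace (fst q) (snd q) = {}) \<and>
     (\<Union>p\<in>D. sspace (fst p) (snd p)) = M"

lemma stanley_decomp_iff: "stanley_decomp n A I J D \<longleftrightarrow> decomp n A (I - J) D"
  unfolding stanley_decomp_def decomp_def is_stanley_space_def
  using u_in_sspace by (auto simp: split_beta)

lemma inbox_T:
  assumes "(k,True) \<notin> Z" "(k,False) \<notin> Z" "u k = 0"
  shows "inbox (u(k:=a)) (insert (k,True) Z) v \<longleftrightarrow> inbox u Z (v(k:=0)) \<and> a \<le> v k"
proof
  assume H: "inbox (u(k:=a)) (insert (k,True) Z) v"
  have "inbox u Z (v(k:=0))" unfolding inbox_def
  proof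
    fix i show "((i, True) \<in> Z \<longrightarrow> u i \<le> (v(k := 0)) i) \<and>
          ((i, False) \<in> Z \<longrightarrow> (v(k := 0)) i \<le> u i) \<and>
          ((i, True) \<notin> Z \<longrightarrow> (i, False) \<notin> Z \<longrightarrow> (v(k := 0)) i = u i)"
      using H[unfolded inbox_def, THEN spec[of _ i]] assms by (cases "i = k") auto
  qed
  moreover have "a \<le> v k" using H unfolding inbox_def by auto
  ultimately show "inbox u Z (v(k:=0)) \<and> a \<le> v k" by simp
next
  assume H: "inbox u Z (v(k:=0)) \<and> a \<le> v k"
  show "inbox (u(k:=a)) (insert (k,True) Z) v" unfolding inbox_def
  proof
    fix i show "((i, True) \<in> insert (k, True) Z \<longrightarrow> (u(k := a)) i \<le> v i) \<and>
              ((i, False) \<in> insert (k, True) Z \<longrightarrow> v i \<le> (u(k := a)) i) \<and>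
              ((i, True) \<notin> insert (k, True) Z \<longrightarrow> (i, False) \<notin> insert (k, True) Z \<longrightarrow> v i = (u(k := a)) i)"
    using H[THEN conjunct1, unfolded inbox_def, THEN spec[of _ i]] H assms by (cases "i = k") auto
  qed
qed
lemma inbox_F:
  assumes "(k,True) \<notin> Z" "(k,False) \<notin> Z" "u k = 0"
  shows "inbox (u(k:=a)) (insert (k,False) Z) v \<longleftrightarrow> inbox u Z (v(k:=0)) \<and> v k \<le> a"
proof
  assume H: "inbox (u(k:=a)) (insert (k,False) Z) v"
  have "inbox u Z (v(k:=0))" unfolding inbox_def
  proof
    fix i show "((i, True) \<in> Z \<longrightarrow> u i \<le> (v(k := 0)) i) \<and>
          ((i, False) \<in> Z \<longrightarrow> (v(k := 0)) i \<le> u i) \<and>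
          ((i, True) \<notin> Z \<longrightarrow> (i, False) \<notin> Z \<longrightarrow> (v(k := 0)) i = u i)"
      using H[unfolded inbox_def, THEN spec[of _ i]] assms by (cases "i = k") auto
  qed
  moreover have "v k \<le> a" using H unfolding inbox_def by auto
  ultimately show "inbox u Z (v(k:=0)) \<and> v k \<le> a" by simp
next
  assume H: "inbox u Z (v(k:=0)) \<and> v k \<le> a"
  show "inbox (u(k:=a)) (insert (k,False) Z) v" unfolding inbox_def
  proof
    fix i show "((i, True) \<in> insert (k, False) Z \<longrightarrow> (u(k := a)) i \<le> v i) \<and>
              ((i, False) \<in> insert (k, False) Z \<longrightarrow> v i \<le> (u(k := a)) i) \<and>
              ((i, True) \<notin> insert (k, False) Z \<longrightarrow> (i, False) \<notin> insert (k, False) Z \<longrightarrow> v i = (u(k := a)) i)"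
    using H[THEN conjunct1, unfolded inbox_def, THEN spec[of _ i]] H assms by (cases "i = k") auto
  qed
qed
lemma inbox_0:
  assumes "(k,True) \<notin> Z" "(k,False) \<notin> Z" "u k = 0"
  shows "inbox (u(k:=a)) (Z) v \<longleftrightarrow> inbox u Z (v(k:=0)) \<and> v k = a"
proof
  assume H: "inbox (u(k:=a)) (Z) v"
  have "inbox u Z (v(k:=0))" unfolding inbox_def
  proof
    fix i show "((i, True) \<in> Z \<longrightarrow> u i \<le> (v(k := 0)) i) \<and>
          ((i, False) \<in> Z \<longrightarrow> (v(k := 0)) i \<le> u i) \<and>
          ((i, True) \<notin> Z \<longrightarrow> (i, False) \<notin> Z \<longrightarrow> (v(k := 0)) i = u i)"
      using H[unfolded inbox_def, THEN spec[of _ i]] assms by (cases "i = k") auto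
  qed
  moreover have "v k = a" using H[unfolded inbox_def, THEN spec[of _ k]] assms by auto
  ultimately show "inbox u Z (v(k:=0)) \<and> v k = a" by simp
next
  assume H: "inbox u Z (v(k:=0)) \<and> v k = a"
  show "inbox (u(k:=a)) (Z) v" unfolding inbox_def
  proof
    fix i show "((i, True) \<in> Z \<longrightarrow> (u(k := a)) i \<le> v i) \<and>
              ((i, False) \<in> Z \<longrightarrow> v i \<le> (u(k := a)) i) \<and>
              ((i, True) \<notin> Z \<longrightarrow> (i, False) \<notin> Z \<longrightarrow> v i = (u(k := a)) i)"
    using H[THEN conjunct1, unfolded inbox_def, THEN spec[of _ i]] H assms by (cases "i = k") auto
  qed
qed
lemma box_upd:
  assumes "finite Z" "nopair Z" "(k,True) \<notin> Z" "(k,False) \<notin> Z" "u k = 0"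
  shows "v \<in> sspace (u(k:=a)) Z \<longleftrightarrow> v(k:=0) \<in> sspace u Z \<and> v k = a"
    and "v \<in> sspace (u(k:=a)) (insert (k,True) Z) \<longleftrightarrow> v(k:=0) \<in> sspace u Z \<and> a \<le> v k"
    and "v \<in> sspace (u(k:=a)) (insert (k,False) Z) \<longleftrightarrow> v(k:=0) \<in> sspace u Z \<and> v k \<le> a"
proof -
  have np1: "nopair (insert (k,True) Z)" and np2: "nopair (insert (k,False) Z)"
    using assms unfolding nopair_def by auto
  show "v \<in> sspace (u(k:=a)) Z \<longleftrightarrow> v(k:=0) \<in> sspace u Z \<and> v k = a"
    unfolding sspace_box[OF assms(1,2)] using inbox_0[where k=k and Z=Z and u=u and a=a and v=v, OF assms(3-5)] .
  show "v \<in> sspace (u(k:=a)) (insert (k,True) Z) \<longleftrightarrow> v(k:=0) \<in> sspace u Z \<and> a \<le> v k"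
    unfolding sspace_box[OF assms(1,2)] sspace_box[OF finite_insert[THEN iffD2, OF assms(1)] np1]
    using inbox_T[where k=k and Z=Z and u=u and a=a and v=v, OF assms(3-5)] .
  show "v \<in> sspace (u(k:=a)) (insert (k,False) Z) \<longleftrightarrow> v(k:=0) \<in> sspace u Z \<and> v k \<le> a"
    unfolding sspace_box[OF assms(1,2)] sspace_box[OF finite_insert[THEN iffD2, OF assms(1)] np2]
    using inbox_F[where k=k and Z=Z and u=u and a=a and v=v, OF assms(3-5)] .
qed

lemma decomp_lift:
  assumes "decomp n A M D"
    and "\<And>p. p \<in> D \<Longrightarrow> stanley_dirs n' A' (snd (g p)) \<and>
          sspace (fst (g p)) (snd (g p)) = {v. v(k:=0) \<in> sspace (fst p) (snd p) \<and> P (v k)}"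
  shows "decomp n' A' {v. v(k:=0) \<in> M \<and> P (v k)} (g ` D)"
proof -
  have fin: "finite D" and sub: "\<And>p. p \<in> D \<Longrightarrow> sspace (fst p) (snd p) \<subseteq> M"
    and dis: "\<And>p q. p \<in> D \<Longrightarrow> q \<in> D \<Longrightarrow> p \<noteq> q \<Longrightarrow> sspace (fst p) (snd p) \<inter> sspace (fst q) (snd q) = {}"
    and un: "(\<Union>p\<in>D. sspace (fst p) (snd p)) = M"
    using assms(1) unfolding decomp_def by auto
  show ?thesis unfolding decomp_def
  proof (intro conjI ballI impI)
    show "finite (g ` D)" using fin by simp
  next
    fix p' assume "p' \<in> g ` D"
    then obtain p where p: "p \<in> D" "p' = g p" by auto
    show "stanley_dirs n' A' (snd p')" using assms(2)[OF p(1)] p by simp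
    show "sspace (fst p') (snd p') \<subseteq> {v. v(k:=0) \<in> M \<and> P (v k)}"
      using assms(2)[OF p(1)] sub[OF p(1)] p by auto
  next
    fix p' q' assume "p' \<in> g ` D" "q' \<in> g ` D" "p' \<noteq> q'"
    then obtain p q where p: "p \<in> D" "p' = g p" and q: "q \<in> D" "q' = g q" and "p \<noteq> q" by auto
    then show "sspace (fst p') (snd p') \<inter> sspace (fst q') (snd q') = {}"
      using assms(2)[OF p(1)] assms(2)[OF q(1)] dis[OF p(1) q(1)] by auto
  next
    show "(\<Union>p'\<in>g ` D. sspace (fst p') (snd p')) = {v. v(k:=0) \<in> M \<and> P (v k)}"
      using assms(2) un by auto
  qed
qed

lemma decomp_union:
  assumes "finite K" "\<And>k. k \<in> K \<Longrightarrow> decomp n A (M k) (D k)"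
    and "\<And>k l. k \<in> K \<Longrightarrow> l \<in> K \<Longrightarrow> k \<noteq> l \<Longrightarrow> M k \<inter> M l = {}"
  shows "decomp n A (\<Union>k\<in>K. M k) (\<Union>k\<in>K. D k)"
  unfolding decomp_def
proof (intro conjI ballI impI)
  show "finite (\<Union>k\<in>K. D k)" using assms(1,2) unfolding decomp_def by auto
next
  fix p assume "p \<in> (\<Union>k\<in>K. D k)"
  then obtain k where k: "k \<in> K" "p \<in> D k" by auto
  then show "stanley_dirs n A (snd p)" "sspace (fst p) (snd p) \<subseteq> (\<Union>k\<in>K. M k)"
    using assms(2)[OF k(1)] unfolding decomp_def by auto
next
  fix p q assume "p \<in> (\<Union>k\<in>K. D k)" "q \<in> (\<Union>k\<in>K. D k)" "p \<noteq> q"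
  then obtain k l where k: "k \<in> K" "p \<in> D k" and l: "l \<in> K" "q \<in> D l" by auto
  show "sspace (fst p) (snd p) \<inter> sspace (fst q) (snd q) = {}"
  proof (cases "k = l")
    case True then show ?thesis using assms(2)[OF k(1)] k l \<open>p \<noteq> q\<close> unfolding decomp_def by auto
  next
    case False
    have "sspace (fst p) (snd p) \<subseteq> M k" "sspace (fst q) (snd q) \<subseteq> M l"
      using assms(2)[OF k(1)] assms(2)[OF l(1)] k l unfolding decomp_def by auto
    then show ?thesis using assms(3)[OF k(1) l(1) False] by blast
  qed
next
  show "(\<Union>p\<in>(\<Union>k\<in>K. D k). sspace (fst p) (snd p)) = (\<Union>k\<in>K. M k)"
    using assms(2) unfolding decomp_def by auto
qed

lemma decomp_Un:
  assumes "decomp n A M1 D1" "decomp n A M2 D2" "M1 \<inter> M2 = {}"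
  shows "decomp n A (M1 \<union> M2) (D1 \<union> D2)"
proof -
  have "decomp n A (\<Union>b\<in>{True,False}. if b then M1 else M2) (\<Union>b\<in>{True,False}. if b then D1 else D2)"
    by (rule decomp_union) (use assms in auto)
  then show ?thesis by (simp add: Un_commute)
qed

lemma dirs_info:
  assumes "stanley_dirs n A Z"
  shows "finite Z" "nopair Z" "\<And>b. (n,b) \<notin> Z"
  using assms stanley_dirs_finite stanley_dirs_nopair unfolding stanley_dirs_def by auto

lemma dirs_insert:
  assumes "stanley_dirs n A Z"
  shows "stanley_dirs (Suc n) (insert n A) (insert (n,b) Z)"
  using assms unfolding stanley_dirs_def by auto

definition liftL :: "nat \<Rightarrow> nat set \<Rightarrow> (nat \<Rightarrow> int) set \<Rightarrow> (nat \<Rightarrow> int) set" where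
  "liftL n A M = {v \<in> lmonos (Suc n) (insert n A). v(n:=0) \<in> M}"

lemma liftL_eq:
  assumes "M \<subseteq> lmonos n A"
  shows "{v. v(n:=0) \<in> M} = liftL n A M"
proof -
  have "v \<in> lmonos (Suc n) (insert n A)" if "v(n:=0) \<in> lmonos n A" for v
    using that unfolding lmonos_def
    by (auto simp: Suc_le_eq) (metis fun_upd_other less_irrefl_nat nat_less_le)+
  then show ?thesis using assms unfolding liftL_def by auto
qed

lemma decomp_L:
  assumes "decomp n A M D" "M \<subseteq> lmonos n A"
  shows "\<exists>D'. decomp (Suc n) (insert n A) (liftL n A M) D' \<and>
     (D \<noteq> {} \<longrightarrow> sdepth_decomp D' = Suc (sdepth_decomp D))"
proof -
  define gP where "gP p = (fst p, insert (n,True) (snd p))" for p :: "(nat \<Rightarrow> int) \<times> (nat \<times> bool) set"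
  define gM where "gM p = ((fst p)(n:= -1), insert (n,False) (snd p))" for p :: "(nat \<Rightarrow> int) \<times> (nat \<times> bool) set"
  have info: "stanley_dirs n A (snd p) \<and> fst p n = 0" if "p \<in> D" for p
  proof -
    have "stanley_dirs n A (snd p)" "sspace (fst p) (snd p) \<subseteq> M" using assms(1) that unfolding decomp_def by auto
    moreover have "fst p \<in> lmonos n A" using calculation(2) assms(2) u_in_sspace by blast
    ultimately show ?thesis using lmonos_above by blast
  qed
  have dP: "decomp (Suc n) (insert n A) {v. v(n:=0) \<in> M \<and> 0 \<le> v n} (gP ` D)"
  proof (rule decomp_lift[OF assms(1)])
    fix p assume p: "p \<in> D"
    note i = info[OF p] dirs_info[OF info[OF p, THEN conjunct1]]
    have e: "(fst p)(n:=0) = fst p" using i by auto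
    show "stanley_dirs (Suc n) (insert n A) (snd (gP p)) \<and>
          sspace (fst (gP p)) (snd (gP p)) = {v. v(n:=0) \<in> sspace (fst p) (snd p) \<and> 0 \<le> v n}"
      unfolding gP_def using dirs_insert[OF i(1)[THEN conjunct1]] box_upd(2)[where k=n and Z="snd p" and u="fst p", OF i(2,3,4,4) i(1)[THEN conjunct2], of _ 0, unfolded e]
      by (auto simp: set_eq_iff)
  qed
  have dM: "decomp (Suc n) (insert n A) {v. v(n:=0) \<in> M \<and> (\<lambda>x. x \<le> -1) (v n)} (gM ` D)"
  proof (rule decomp_lift[OF assms(1)])
    fix p assume p: "p \<in> D"
    note i = info[OF p] dirs_info[OF info[OF p, THEN conjunct1]]
    show "stanley_dirs (Suc n) (insert n A) (snd (gM p)) \<and>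
          sspace (fst (gM p)) (snd (gM p)) = {v. v(n:=0) \<in> sspace (fst p) (snd p) \<and> (\<lambda>x. x \<le> -1) (v n)}"
      unfolding gM_def using dirs_insert[OF i(1)[THEN conjunct1]] box_upd(3)[where k=n and Z="snd p" and u="fst p", OF i(2,3,4,4) i(1)[THEN conjunct2], of _ "-1"]
      by (auto simp: set_eq_iff)
  qed
  have U: "decomp (Suc n) (insert n A) ({v. v(n:=0) \<in> M \<and> 0 \<le> v n} \<union> {v. v(n:=0) \<in> M \<and> (\<lambda>x. x \<le> -1) (v n)}) (gP ` D \<union> gM ` D)"
    by (rule decomp_Un[OF dP dM]) auto
  have "{v. v(n:=0) \<in> M \<and> 0 \<le> v n} \<union> {v. v(n:=0) \<in> M \<and> (\<lambda>x. x \<le> -1) (v n)} = {v. v(n:=0) \<in> M}"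
    by auto
  with U liftL_eq[OF assms(2)] have U': "decomp (Suc n) (insert n A) (liftL n A M) (gP ` D \<union> gM ` D)" by simp
  have cards: "(\<lambda>(u, Z). card Z) ` (gP ` D \<union> gM ` D) = Suc ` ((\<lambda>(u, Z). card Z) ` D)"
  proof -
    have "card (insert (n,b) (snd p)) = Suc (card (snd p))" if "p \<in> D" for p b
      using dirs_info[OF info[OF that, THEN conjunct1]] by simp
    note cI = this
    have cP: "(\<lambda>(u, Z). card Z) ` (gP ` D) = Suc ` ((\<lambda>(u, Z). card Z) ` D)"
      unfolding image_image by (rule image_cong) (auto simp: gP_def split_beta cI)
    have cM: "(\<lambda>(u, Z). card Z) ` (gM ` D) = Suc ` ((\<lambda>(u, Z). card Z) ` D)"
      unfolding image_image by (rule image_cong) (auto simp: gM_def split_beta cI)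
    show ?thesis unfolding image_Un cP cM by simp
  qed
  have fin: "finite D" using assms(1) unfolding decomp_def by auto
  have "D \<noteq> {} \<longrightarrow> sdepth_decomp (gP ` D \<union> gM ` D) = Suc (sdepth_decomp D)"
    unfolding sdepth_decomp_def cards using fin
    by (auto intro!: mono_Min_commute[symmetric] monoI)
  with U' show ?thesis by blast
qed

definition feas :: "nat \<Rightarrow> (nat \<Rightarrow> int) \<Rightarrow> (nat \<times> bool) set \<Rightarrow> bool" where
  "feas k u Z \<longleftrightarrow> ((k,True)\<in>Z \<longrightarrow> u k \<le> 0) \<and> ((k,False)\<in>Z \<longrightarrow> 0 \<le> u k) \<and>
     ((k,True)\<notin>Z \<longrightarrow> (k,False)\<notin>Z \<longrightarrow> u k = 0)"

lemma inbox_restr: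
  "(inbox u Z v \<and> v k = 0) \<longleftrightarrow> (inbox (u(k:=0)) (Z - {(k,True),(k,False)}) v \<and> feas k u Z)"
proof
  assume H: "inbox u Z v \<and> v k = 0"
  have "inbox (u(k:=0)) (Z - {(k,True),(k,False)}) v" unfolding inbox_def
  proof
    fix i show "((i, True) \<in> Z - {(k, True), (k, False)} \<longrightarrow> (u(k := 0)) i \<le> v i) \<and>
         ((i, False) \<in> Z - {(k, True), (k, False)} \<longrightarrow> v i \<le> (u(k := 0)) i) \<and>
         ((i, True) \<notin> Z - {(k, True), (k, False)} \<longrightarrow>
          (i, False) \<notin> Z - {(k, True), (k, False)} \<longrightarrow> v i = (u(k := 0)) i)"
      using H[THEN conjunct1, unfolded inbox_def, THEN spec[of _ i]] H by (cases "i = k") auto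
  qed
  moreover have "feas k u Z"
    using H[THEN conjunct1, unfolded inbox_def, THEN spec[of _ k]] H unfolding feas_def by auto
  ultimately show "inbox (u(k:=0)) (Z - {(k,True),(k,False)}) v \<and> feas k u Z" by simp
next
  assume H: "inbox (u(k:=0)) (Z - {(k,True),(k,False)}) v \<and> feas k u Z"
  have vk: "v k = 0" using H[THEN conjunct1, unfolded inbox_def, THEN spec[of _ k]] by auto
  have "inbox u Z v" unfolding inbox_def
  proof
    fix i show "((i, True) \<in> Z \<longrightarrow> u i \<le> v i) \<and> ((i, False) \<in> Z \<longrightarrow> v i \<le> u i) \<and>
         ((i, True) \<notin> Z \<longrightarrow> (i, False) \<notin> Z \<longrightarrow> v i = u i)"
      using H[THEN conjunct1, unfolded inbox_def, THEN spec[of _ i]] H vk unfolding feas_def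
      by (cases "i = k") auto
  qed
  with vk show "inbox u Z v \<and> v k = 0" by simp
qed

lemma card_restr:
  assumes "finite Z" "nopair Z"
  shows "card Z \<le> Suc (card (Z - {(k,True),(k,False)}))"
proof -
  obtain x where "Z \<subseteq> insert x (Z - {(k,True),(k,False)})"
  proof (cases "(k,True) \<in> Z")
    case True
    then have "(k,False) \<notin> Z" using assms(2) unfolding nopair_def by auto
    then have "Z \<subseteq> insert (k,True) (Z - {(k,True),(k,False)})" by auto
    then show ?thesis using that by blast
  next
    case False
    then have "Z \<subseteq> insert (k,False) (Z - {(k,True),(k,False)})" by auto
    then show ?thesis using that by blast
  qed
  then have "card Z \<le> card (insert x (Z - {(k,True),(k,False)}))"
    by (rule card_mono[rotated]) (use assms in auto)
  also have "\<dots> \<le> Suc (card (Z - {(k,True),(k,False)}))"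
    using assms by (simp add: card_insert_if)
  finally show ?thesis .
qed

lemma decomp_U:
  assumes "decomp (Suc n) (insert n A) M1 D'"
  shows "\<exists>D. decomp n A {v \<in> M1. v n = 0} D \<and> (\<forall>q\<in>D. \<exists>p\<in>D'. card (snd p) \<le> Suc (card (snd q)))"
proof -
  define restr where "restr p = ((fst p)(n:=0), snd p - {(n,True),(n,False)})"
    for p :: "(nat \<Rightarrow> int) \<times> (nat \<times> bool) set"
  define F where "F p = feas n (fst p) (snd p)" for p :: "(nat \<Rightarrow> int) \<times> (nat \<times> bool) set"
  define D where "D = restr ` {p\<in>D'. F p}"
  have fin': "finite D'" and sub': "\<And>p. p \<in> D' \<Longrightarrow> stanley_dirs (Suc n) (insert n A) (snd p) \<and> sspace (fst p) (snd p) \<subseteq> M1"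
    and dis': "\<And>p q. p \<in> D' \<Longrightarrow> q \<in> D' \<Longrightarrow> p \<noteq> q \<Longrightarrow> sspace (fst p) (snd p) \<inter> sspace (fst q) (snd q) = {}"
    and un': "(\<Union>p\<in>D'. sspace (fst p) (snd p)) = M1"
    using assms unfolding decomp_def by auto
  have fz: "finite (snd p)" "nopair (snd p)" if "p \<in> D'" for p
    using sub'[OF that] stanley_dirs_finite stanley_dirs_nopair by auto
  have dr: "stanley_dirs n A (snd (restr p))" if "p \<in> D'" for p
    using sub'[OF that] unfolding restr_def stanley_dirs_def by auto
  have fzr: "finite (snd (restr p))" "nopair (snd (restr p))" if "p \<in> D'" for p
    using dr[OF that] stanley_dirs_finite stanley_dirs_nopair by auto
  have key: "{v \<in> sspace (fst p) (snd p). v n = 0} = (if F p then sspace (fst (restr p)) (snd (restr p)) else {})"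
    if "p \<in> D'" for p
    using inbox_restr[of "fst p" "snd p" _ n] fzr[OF that]
    unfolding restr_def F_def fst_conv snd_conv sspace_box[OF fz[OF that]]
    by (auto simp: sspace_box)
  have "decomp n A {v \<in> M1. v n = 0} D" unfolding decomp_def
  proof (intro conjI ballI impI)
    show "finite D" unfolding D_def using fin' by simp
  next
    fix q assume "q \<in> D"
    then obtain p where p: "p \<in> D'" "F p" "q = restr p" unfolding D_def by auto
    show "stanley_dirs n A (snd q)" using dr[OF p(1)] p by simp
    show "sspace (fst q) (snd q) \<subseteq> {v \<in> M1. v n = 0}" using key[OF p(1)] p sub'[OF p(1)] by auto
  next
    fix q q' assume "q \<in> D" "q' \<in> D" "q \<noteq> q'"
    then obtain p p' where p: "p \<in> D'" "F p" "q = restr p" and p': "p' \<in> D'" "F p'" "q' = restr p'"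
      and "p \<noteq> p'" unfolding D_def by auto
    then show "sspace (fst q) (snd q) \<inter> sspace (fst q') (snd q') = {}"
      using key[OF p(1)] key[OF p'(1)] dis'[OF p(1) p'(1)] by auto
  next
    have "(\<Union>q\<in>D. sspace (fst q) (snd q)) = (\<Union>p\<in>D'. {v \<in> sspace (fst p) (snd p). v n = 0})"
      unfolding D_def using key by auto
    also have "\<dots> = {v \<in> M1. v n = 0}" using un' by auto
    finally show "(\<Union>q\<in>D. sspace (fst q) (snd q)) = {v \<in> M1. v n = 0}" .
  qed
  moreover have "\<forall>q\<in>D. \<exists>p\<in>D'. card (snd p) \<le> Suc (card (snd q))"
  proof
    fix q assume "q \<in> D"
    then obtain p where p: "p \<in> D'" "q = restr p" unfolding D_def by auto
    show "\<exists>p\<in>D'. card (snd p) \<le> Suc (card (snd q))"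
      using card_restr[OF fz[OF p(1)], of n] p unfolding restr_def by auto
  qed
  ultimately show ?thesis by blast
qed

lemma lmonos_upd:
  assumes "b \<in> lmonos n (A - {n})" "n \<in> A \<or> 0 \<le> c"
  shows "b(n:=c) \<in> lmonos (Suc n) A"
  using assms unfolding lmonos_def by (auto simp: Suc_le_eq)

lemma lmonos_restr:
  assumes "v \<in> lmonos (Suc n) A"
  shows "v(n:=0) \<in> lmonos n (A - {n})"
  using assms unfolding lmonos_def by (auto simp: Suc_le_eq)

lemma lmonos_Suc_nonneg:
  assumes "v \<in> lmonos (Suc n) A" "n \<notin> A"
  shows "0 \<le> v n"
  using assms unfolding lmonos_def by auto

lemma lmonos_n0: "b \<in> lmonos n A \<Longrightarrow> b n = 0"
  using lmonos_above by blast

lemma e_lmonos: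
  assumes "n \<in> A \<or> 0 \<le> c"
  shows "(\<lambda>i. if i = n then c else 0) \<in> lmonos (Suc n) A"
  using assms unfolding lmonos_def by auto

lemma lmonos_mono_n:
  assumes "w \<in> lmonos n B" "B \<subseteq> A' \<union> {n}" shows "w \<in> lmonos (Suc n) A'"
  unfolding lmonos_def
proof (intro CollectI conjI allI impI)
  fix j assume "Suc n \<le> j" then show "w j = 0" using assms(1) unfolding lmonos_def by auto
next
  fix j assume j: "j < Suc n" "j \<notin> A'"
  show "0 \<le> w j"
  proof (cases "j = n")
    case True then show ?thesis using assms(1) unfolding lmonos_def by auto
  next
    case False then have "j < n" "j \<notin> B" using j assms(2) by auto
    then show ?thesis using assms(1) unfolding lmonos_def by auto
  qed
qed

definition slice :: "nat \<Rightarrow> nat set \<Rightarrow> (nat \<Rightarrow> int) set \<Rightarrow> int \<Rightarrow> (nat \<Rightarrow> int) set" where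
  "slice n A I k = {b \<in> lmonos n (A - {n}). b(n:=k) \<in> I}"

lemma ideal_add:
  "mono_ideal n A I \<Longrightarrow> u \<in> I \<Longrightarrow> w \<in> lmonos n A \<Longrightarrow> (\<lambda>i. u i + w i) \<in> I"
  unfolding mono_ideal_def by auto

lemma ideal_sub: "mono_ideal n A I \<Longrightarrow> I \<subseteq> lmonos n A"
  unfolding mono_ideal_def by auto

lemma slice_ideal:
  assumes "mono_ideal (Suc n) A I"
  shows "mono_ideal n (A - {n}) (slice n A I k)"
  unfolding mono_ideal_def
proof (intro conjI ballI)
  show "slice n A I k \<subseteq> lmonos n (A - {n})" unfolding slice_def by auto
next
  fix b w assume b: "b \<in> slice n A I k" and w: "w \<in> lmonos n (A - {n})"
  have bl: "b \<in> lmonos n (A - {n})" and bI: "b(n:=k) \<in> I" using b unfolding slice_def by auto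
  have w': "w \<in> lmonos (Suc n) A" by (rule lmonos_mono_n[OF w]) auto
  have "(\<lambda>i. (b(n:=k)) i + w i) \<in> I" by (rule ideal_add[OF assms bI w'])
  moreover have "(\<lambda>i. (b(n:=k)) i + w i) = (\<lambda>i. b i + w i)(n:=k)"
    using lmonos_n0[OF w] by auto
  ultimately show "(\<lambda>i. b i + w i) \<in> slice n A I k"
    unfolding slice_def using lmonos_add[OF bl w] by auto
qed

lemma mem_slice:
  assumes "v \<in> lmonos (Suc n) A"
  shows "v \<in> I \<longleftrightarrow> v(n:=0) \<in> slice n A I (v n)"
  using lmonos_restr[OF assms] unfolding slice_def by auto

lemma slice_shift:
  assumes "mono_ideal (Suc n) A I" "n \<in> A \<or> k \<le> l"
  shows "slice n A I k \<subseteq> slice n A I l"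
proof
  fix b assume "b \<in> slice n A I k"
  then have bl: "b \<in> lmonos n (A - {n})" and bI: "b(n:=k) \<in> I" unfolding slice_def by auto
  have "(\<lambda>i. (b(n:=k)) i + (\<lambda>i. if i = n then l - k else 0) i) \<in> I"
    by (rule ideal_add[OF assms(1) bI e_lmonos]) (use assms(2) in auto)
  moreover have "(\<lambda>i. (b(n:=k)) i + (\<lambda>i. if i = n then l - k else 0) i) = b(n:=l)" by auto
  ultimately show "b \<in> slice n A I l" unfolding slice_def using bl by auto
qed

definition gen :: "nat \<Rightarrow> nat set \<Rightarrow> (nat \<Rightarrow> int) set \<Rightarrow> (nat \<Rightarrow> int) set" where
  "gen n A G = {v. \<exists>g\<in>G. \<exists>w\<in>lmonos n A. v = (\<lambda>i. g i + w i)}"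

definition FG :: "nat \<Rightarrow> nat set \<Rightarrow> (nat \<Rightarrow> int) set \<Rightarrow> bool" where
  "FG n A I \<longleftrightarrow> (\<exists>G. finite G \<and> G \<subseteq> I \<and> I \<subseteq> gen n A G)"

lemma gen_sub: "mono_ideal n A I \<Longrightarrow> G \<subseteq> I \<Longrightarrow> gen n A G \<subseteq> I"
  unfolding gen_def using ideal_add by blast

lemma chain_stable:
  assumes fg: "\<And>I. mono_ideal n A I \<Longrightarrow> FG n A I"
    and ideals: "\<And>k. mono_ideal n A (C k)" and mono: "\<And>k l. k \<le> l \<Longrightarrow> C k \<subseteq> C l"
  shows "\<exists>m::nat. \<forall>k. C k \<subseteq> C m"
proof -
  define U where "U = (\<Union>k. C k)"
  have "mono_ideal n A U" unfolding U_def mono_ideal_def using ideals unfolding mono_ideal_def by blast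
  then obtain G where G: "finite G" "G \<subseteq> U" "U \<subseteq> gen n A G" using fg unfolding FG_def by blast
  have "\<forall>g\<in>G. \<exists>k. g \<in> C k" using G(2) unfolding U_def by auto
  then obtain kf where kf: "\<And>g. g \<in> G \<Longrightarrow> g \<in> C (kf g)" by metis
  define m where "m = Max (insert 0 (kf ` G))"
  have "G \<subseteq> C m"
  proof
    fix g assume g: "g \<in> G"
    have "kf g \<le> m" unfolding m_def using G(1) g by auto
    then show "g \<in> C m" using mono kf[OF g] by blast
  qed
  then have "gen n A G \<subseteq> C m" by (rule gen_sub[OF ideals])
  then have "\<forall>k. C k \<subseteq> C m" using G(3) unfolding U_def by blast
  then show ?thesis by blast
qed

lemma FG_all: "A \<subseteq> {..<n} \<Longrightarrow> mono_ideal n A I \<Longrightarrow> FG n A I"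
proof (induction n arbitrary: A I)
  case 0
  have l0: "lmonos 0 A = {\<lambda>_. 0}" unfolding lmonos_def by auto
  have "I \<subseteq> {\<lambda>_. 0}" using ideal_sub[OF 0(2)] l0 by simp
  then have "finite I" using finite_subset by blast
  moreover have "I \<subseteq> gen 0 A I" unfolding gen_def l0 by auto
  ultimately show ?case unfolding FG_def by blast
next
  case (Suc n)
  have A': "A - {n} \<subseteq> {..<n}" using Suc.prems(1) by auto
  have IHs: "\<And>k. FG n (A - {n}) (slice n A I k)"
    using Suc.IH[OF A' slice_ideal[OF Suc.prems(2)]] by blast
  show ?case
  proof (cases "n \<in> A")
    case True
    obtain G where G: "finite G" "G \<subseteq> slice n A I 0" "slice n A I 0 \<subseteq> gen n (A - {n}) G"
      using IHs unfolding FG_def by blast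
    have "G \<subseteq> I"
    proof
      fix g assume "g \<in> G"
      then have "g \<in> lmonos n (A - {n})" "g(n:=0) \<in> I" using G(2) unfolding slice_def by auto
      then show "g \<in> I" using lmonos_n0 by (metis fun_upd_triv)
    qed
    moreover have "I \<subseteq> gen (Suc n) A G"
    proof
      fix v assume v: "v \<in> I"
      have vl: "v \<in> lmonos (Suc n) A" using v ideal_sub[OF Suc.prems(2)] by auto
      have "v(n:=0) \<in> slice n A I (v n)" using mem_slice[OF vl] v by simp
      then have "v(n:=0) \<in> slice n A I 0" using slice_shift[OF Suc.prems(2)] True by blast
      then obtain g w where g: "g \<in> G" and w: "w \<in> lmonos n (A - {n})" and e: "v(n:=0) = (\<lambda>i. g i + w i)"
        using G(3) unfolding gen_def by blast
      have gl: "g \<in> lmonos n (A - {n})" using g G(2) unfolding slice_def by auto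
      have "w(n := v n) \<in> lmonos (Suc n) A" by (rule lmonos_upd[OF w]) (use True in auto)
      moreover have "v = (\<lambda>i. g i + (w(n := v n)) i)"
      proof
        fix i show "v i = g i + (w(n := v n)) i"
          using fun_cong[OF e, of i] lmonos_n0[OF gl] by (cases "i = n") auto
      qed
      ultimately show "v \<in> gen (Suc n) A G" unfolding gen_def using g by blast
    qed
    ultimately show ?thesis using G(1) unfolding FG_def by blast
  next
    case False
    define C where "C k = slice n A I (int k)" for k :: nat
    have AA: "A - {n} = A" using False by auto
    have fgn: "\<And>J. mono_ideal n (A - {n}) J \<Longrightarrow> FG n (A - {n}) J" using Suc.IH[OF A'] by blast
    obtain m where m: "\<forall>k. C k \<subseteq> C m"
      using chain_stable[OF fgn, of C] slice_ideal[OF Suc.prems(2)] slice_shift[OF Suc.prems(2)]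
      unfolding C_def by force
    have "\<forall>k. \<exists>G. finite G \<and> G \<subseteq> C k \<and> C k \<subseteq> gen n (A - {n}) G"
      using IHs unfolding FG_def C_def by blast
    then obtain Gf where Gf: "\<And>k. finite (Gf k)" "\<And>k. Gf k \<subseteq> C k" "\<And>k. C k \<subseteq> gen n (A - {n}) (Gf k)"
      by metis
    define G where "G = (\<Union>k\<in>{..m}. (\<lambda>g. g(n := int k)) ` Gf k)"
    have "finite G" unfolding G_def using Gf(1) by auto
    moreover have "G \<subseteq> I" unfolding G_def using Gf(2) unfolding C_def slice_def by auto
    moreover have "I \<subseteq> gen (Suc n) A G"
    proof
      fix v assume v: "v \<in> I"
      have vl: "v \<in> lmonos (Suc n) A" using v ideal_sub[OF Suc.prems(2)] by auto
      have vn: "0 \<le> v n" using lmonos_Suc_nonneg[OF vl False] .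
      define k where "k = min (nat (v n)) m"
      have "v(n:=0) \<in> C (nat (v n))" using mem_slice[OF vl] v vn unfolding C_def by simp
      then have "v(n:=0) \<in> C k" using m unfolding k_def by (cases "nat (v n) \<le> m") (auto simp: min_def)
      then obtain g w where g: "g \<in> Gf k" and w: "w \<in> lmonos n (A - {n})" and e: "v(n:=0) = (\<lambda>i. g i + w i)"
        using Gf(3) unfolding gen_def by blast
      have kk: "int k \<le> v n" "k \<le> m" unfolding k_def using vn by auto
      have "w(n := v n - int k) \<in> lmonos (Suc n) A" by (rule lmonos_upd[OF w]) (use kk in auto)
      moreover have "v = (\<lambda>i. (g(n := int k)) i + (w(n := v n - int k)) i)"
      proof
        fix i show "v i = (g(n := int k)) i + (w(n := v n - int k)) i"
          using fun_cong[OF e, of i] by (cases "i = n") auto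
      qed
      moreover have "g(n := int k) \<in> G" unfolding G_def using g kk(2) by auto
      ultimately show "v \<in> gen (Suc n) A G" unfolding gen_def by blast
    qed
    ultimately show ?thesis unfolding FG_def by blast
  qed
qed

lemma slice_const:
  assumes "mono_ideal (Suc n) A I" "n \<in> A"
  shows "slice n A I k = slice n A I 0"
  using slice_shift[OF assms(1)] assms(2) by blast

lemma sspace_empty: "sspace u {} = {u}"
  unfolding sspace_def by simp

lemma dirs_Suc: "stanley_dirs n A Z \<Longrightarrow> stanley_dirs (Suc n) A Z"
  unfolding stanley_dirs_def by auto

lemma dirs_insertT: "stanley_dirs n A Z \<Longrightarrow> stanley_dirs (Suc n) A (insert (n,True) Z)"
  unfolding stanley_dirs_def by auto

lemma exists_decomp:
  "A \<subseteq> {..<n} \<Longrightarrow> mono_ideal n A I \<Longrightarrow> mono_ideal n A J \<Longrightarrow> \<exists>D. decomp n A (I - J) D"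
proof (induction n arbitrary: A I J)
  case 0
  have l0: "lmonos 0 A = {\<lambda>_. 0}" unfolding lmonos_def by auto
  have sub: "I - J \<subseteq> {\<lambda>_. 0}" using ideal_sub[OF 0(2)] l0 by auto
  show ?case
  proof (cases "I - J = {}")
    case True
    then have "decomp 0 A (I - J) {}" unfolding decomp_def by auto
    then show ?thesis by blast
  next
    case False
    then have e: "I - J = {\<lambda>_. 0}" using sub by blast
    have "decomp 0 A (I - J) {(\<lambda>_. 0, {})}"
      unfolding decomp_def e by (auto simp: sspace_empty stanley_dirs_def)
    then show ?thesis by blast
  qed
next
  case (Suc n)
  have A': "A - {n} \<subseteq> {..<n}" using Suc.prems(1) by auto
  have IHs: "\<And>k. \<exists>D. decomp n (A - {n}) (slice n A I k - slice n A J k) D"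
    using Suc.IH[OF A' slice_ideal[OF Suc.prems(2)] slice_ideal[OF Suc.prems(3)]] by blast
  have IJsub: "I - J \<subseteq> lmonos (Suc n) A" using ideal_sub[OF Suc.prems(2)] by auto
  show ?case
  proof (cases "n \<in> A")
    case True
    obtain D0 where D0: "decomp n (A - {n}) (slice n A I 0 - slice n A J 0) D0" using IHs by blast
    have msub: "slice n A I 0 - slice n A J 0 \<subseteq> lmonos n (A - {n})" unfolding slice_def by auto
    obtain D' where D': "decomp (Suc n) (insert n (A - {n})) (liftL n (A - {n}) (slice n A I 0 - slice n A J 0)) D'"
      using decomp_L[OF D0 msub] by blast
    have iA: "insert n (A - {n}) = A" using True by auto
    have "liftL n (A - {n}) (slice n A I 0 - slice n A J 0) = I - J"
    proof (intro set_eqI)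
      fix v
      show "v \<in> liftL n (A - {n}) (slice n A I 0 - slice n A J 0) \<longleftrightarrow> v \<in> I - J"
      proof (cases "v \<in> lmonos (Suc n) A")
        case True
        then show ?thesis unfolding liftL_def iA
          using mem_slice[OF True, of I] mem_slice[OF True, of J]
            slice_const[OF Suc.prems(2) \<open>n \<in> A\<close>] slice_const[OF Suc.prems(3) \<open>n \<in> A\<close>] by auto
      next
        case False then show ?thesis unfolding liftL_def iA using IJsub by auto
      qed
    qed
    then show ?thesis using D' iA by auto
  next
    case False
    have AA: "A - {n} = A" using False by auto
    define CI where "CI k = slice n A I (int k)" for k :: nat
    define CJ where "CJ k = slice n A J (int k)" for k :: nat
    have fgn: "\<And>K. mono_ideal n (A - {n}) K \<Longrightarrow> FG n (A - {n}) K" using FG_all[OF A'] by blast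
    obtain mI where mI: "\<forall>k. CI k \<subseteq> CI mI"
      using chain_stable[OF fgn, of CI] slice_ideal[OF Suc.prems(2)] slice_shift[OF Suc.prems(2)]
      unfolding CI_def by force
    obtain mJ where mJ: "\<forall>k. CJ k \<subseteq> CJ mJ"
      using chain_stable[OF fgn, of CJ] slice_ideal[OF Suc.prems(3)] slice_shift[OF Suc.prems(3)]
      unfolding CJ_def by force
    define m where "m = max mI mJ"
    have monoI: "k \<le> l \<Longrightarrow> CI k \<subseteq> CI l" for k l unfolding CI_def using slice_shift[OF Suc.prems(2)] by auto
    have monoJ: "k \<le> l \<Longrightarrow> CJ k \<subseteq> CJ l" for k l unfolding CJ_def using slice_shift[OF Suc.prems(3)] by auto
    have stI: "m \<le> k \<Longrightarrow> CI k = CI m" for k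
      using mI monoI[of mI m] monoI[of m k] unfolding m_def by auto
    have stJ: "m \<le> k \<Longrightarrow> CJ k = CJ m" for k
      using mJ monoJ[of mJ m] monoJ[of m k] unfolding m_def by auto
    have "\<forall>k. \<exists>D. decomp n A (CI k - CJ k) D" using IHs unfolding CI_def CJ_def AA by blast
    then obtain Df where Df: "\<And>k. decomp n A (CI k - CJ k) (Df k)" by metis
    define P where "P k x = (if k < m then x = int k else int m \<le> x)" for k :: nat and x :: int
    define g where "g k p = (if k < m then ((fst p)(n := int k), snd p)
                              else ((fst p)(n := int m), insert (n,True) (snd p)))"
      for k :: nat and p :: "(nat \<Rightarrow> int) \<times> (nat \<times> bool) set"
    define Mk where "Mk k = {v. v(n:=0) \<in> CI k - CJ k \<and> P k (v n)}" for k
    have dk: "decomp (Suc n) A (Mk k) (g k ` Df k)" for k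
      unfolding Mk_def
    proof (rule decomp_lift[OF Df])
      fix p assume p: "p \<in> Df k"
      have sd: "stanley_dirs n A (snd p)" and ss: "sspace (fst p) (snd p) \<subseteq> CI k - CJ k"
        using Df[of k] p unfolding decomp_def by auto
      have "fst p \<in> lmonos n A" using ss u_in_sspace unfolding CI_def slice_def AA by blast
      then have u0: "fst p n = 0" by (rule lmonos_n0)
      note i = dirs_info[OF sd]
      show "stanley_dirs (Suc n) A (snd (g k p)) \<and>
          sspace (fst (g k p)) (snd (g k p)) = {v. v(n:=0) \<in> sspace (fst p) (snd p) \<and> P k (v n)}"
      proof (cases "k < m")
        case True
        then show ?thesis unfolding g_def P_def
          using dirs_Suc[OF sd] box_upd(1)[where k=n and Z="snd p" and u="fst p", OF i(1,2,3,3) u0]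
          by auto
      next
        case False
        then show ?thesis unfolding g_def P_def
          using dirs_insertT[OF sd] box_upd(2)[where k=n and Z="snd p" and u="fst p", OF i(1,2,3,3) u0]
          by auto
      qed
    qed
    have U: "decomp (Suc n) A (\<Union>k\<in>{..m}. Mk k) (\<Union>k\<in>{..m}. g k ` Df k)"
    proof (rule decomp_union)
      fix k l assume "k \<in> {..m}" "l \<in> {..m}" "k \<noteq> l"
      then show "Mk k \<inter> Mk l = {}" unfolding Mk_def P_def by auto
    qed (use dk in auto)
    have "(\<Union>k\<in>{..m}. Mk k) = I - J"
    proof (intro set_eqI iffI)
      fix v assume "v \<in> (\<Union>k\<in>{..m}. Mk k)"
      then obtain k where k: "k \<le> m" "v(n:=0) \<in> CI k - CJ k" "P k (v n)" unfolding Mk_def by auto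
      have vn: "0 \<le> v n" "nat (v n) < m \<Longrightarrow> k = nat (v n)" "\<not> nat (v n) < m \<Longrightarrow> k = m"
        using k(1,3) unfolding P_def by (auto split: if_splits)
      have "CI (nat (v n)) = CI k \<and> CJ (nat (v n)) = CJ k"
      proof (cases "nat (v n) < m")
        case True then show ?thesis using vn(2) by simp
      next
        case False then show ?thesis using vn(3) stI[of "nat (v n)"] stJ[of "nat (v n)"] by simp
      qed
      moreover have "v(n:=0) \<in> lmonos n (A - {n})" using k(2) unfolding CI_def slice_def by auto
      then have vl: "v \<in> lmonos (Suc n) A" using lmonos_upd[of "v(n:=0)" n A "v n"] vn(1) by auto
      ultimately show "v \<in> I - J" using mem_slice[OF vl, of I] mem_slice[OF vl, of J] k(2) vn(1)
        unfolding CI_def CJ_def by auto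
    next
      fix v assume v: "v \<in> I - J"
      then have vl: "v \<in> lmonos (Suc n) A" using IJsub by auto
      have vn: "0 \<le> v n" using lmonos_Suc_nonneg[OF vl False] .
      have mem: "v(n:=0) \<in> CI (nat (v n)) - CJ (nat (v n))"
        using mem_slice[OF vl, of I] mem_slice[OF vl, of J] v vn unfolding CI_def CJ_def by auto
      show "v \<in> (\<Union>k\<in>{..m}. Mk k)"
      proof (cases "nat (v n) < m")
        case True
        then show ?thesis using mem vn unfolding Mk_def P_def
          by (intro UN_I[of "nat (v n)"]) auto
      next
        case False
        then show ?thesis using mem vn stI[of "nat (v n)"] stJ[of "nat (v n)"] unfolding Mk_def P_def
          by (intro UN_I[of m]) auto
      qed
    qed
    then show ?thesis using U by auto
  qed
qed

lemma sd_le: "finite D \<Longrightarrow> p \<in> D \<Longrightarrow> sdepth_decomp D \<le> card (snd p)"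
  unfolding sdepth_decomp_def by (rule Min_le) (auto simp: split_beta)

lemma sd_in:
  assumes "finite D" "D \<noteq> {}" shows "\<exists>p\<in>D. sdepth_decomp D = card (snd p)"
proof -
  have "Min ((\<lambda>(u, Z). card Z) ` D) \<in> (\<lambda>(u, Z). card Z) ` D" by (rule Min_in) (use assms in auto)
  then obtain p where "p \<in> D" "Min ((\<lambda>(u, Z). card Z) ` D) = (\<lambda>(u, Z). card Z) p" by blast
  then show ?thesis unfolding sdepth_decomp_def by (auto simp: split_beta)
qed

lemma decomp_nonempty: "decomp n A M D \<Longrightarrow> M \<noteq> {} \<Longrightarrow> D \<noteq> {}"
  unfolding decomp_def by auto

lemma sd_bound: "decomp n A M D \<Longrightarrow> M \<noteq> {} \<Longrightarrow> sdepth_decomp D \<le> n"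
proof -
  assume d: "decomp n A M D" and M: "M \<noteq> {}"
  then obtain p where p: "p \<in> D" using decomp_nonempty by blast
  have "finite D" "stanley_dirs n A (snd p)" using d p unfolding decomp_def by auto
  then show ?thesis using sd_le[OF _ p] stanley_dirs_card by (meson le_trans)
qed

lemma sdepth_eq: "sdepth n A I J = (SUP D\<in>{D. decomp n A (I - J) D}. enat (sdepth_decomp D))"
  unfolding sdepth_def stanley_decomp_iff ..

lemma sdepth_upper: "decomp n A (I - J) D \<Longrightarrow> enat (sdepth_decomp D) \<le> sdepth n A I J"
  unfolding sdepth_eq by (rule SUP_upper) auto

lemma sdepth_attained:
  assumes "I - J \<noteq> {}" "\<exists>D. decomp n A (I - J) D"
  shows "\<exists>D. decomp n A (I - J) D \<and> sdepth n A I J = enat (sdepth_decomp D)"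
proof -
  define V where "V = (\<lambda>D. enat (sdepth_decomp D)) ` {D. decomp n A (I - J) D}"
  have "V \<subseteq> enat ` {..n}" unfolding V_def using sd_bound[OF _ assms(1)] by auto
  then have "finite V" using finite_subset by blast
  moreover have "V \<noteq> {}" unfolding V_def using assms(2) by auto
  ultimately have "Sup V \<in> V" using Max_in Max_Sup by metis
  then show ?thesis unfolding sdepth_eq V_def[symmetric] unfolding V_def by auto
qed

lemma ext_mono:
  assumes "A \<subseteq> {..<n}" "mono_ideal n A I"
  shows "mono_ideal (n+r) (laurent_vars n A r) (ext_ideal n A r I)"
  unfolding mono_ideal_def ext_char[OF assms]
proof (intro conjI ballI)
  show "{v \<in> lmonos (n + r) (laurent_vars n A r). trunc n v \<in> I} \<subseteq> lmonos (n + r) (laurent_vars n A r)" by auto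
next
  fix u v assume u: "u \<in> {v \<in> lmonos (n + r) (laurent_vars n A r). trunc n v \<in> I}"
    and v: "v \<in> lmonos (n + r) (laurent_vars n A r)"
  have "trunc n v \<in> lmonos n A" using v unfolding lmonos_def laurent_vars_def trunc_def by auto
  then have "(\<lambda>i. trunc n u i + trunc n v i) \<in> I" using u ideal_add[OF assms(2)] by auto
  moreover have "trunc n (\<lambda>i. u i + v i) = (\<lambda>i. trunc n u i + trunc n v i)" unfolding trunc_def by auto
  ultimately show "(\<lambda>i. u i + v i) \<in> {v \<in> lmonos (n + r) (laurent_vars n A r). trunc n v \<in> I}"
    using lmonos_add u v by auto
qed

lemma trunc_id: "v \<in> lmonos n A \<Longrightarrow> trunc n v = v"
  unfolding trunc_def lmonos_def by auto

lemma lmonos_widen: "v \<in> lmonos n A \<Longrightarrow> v \<in> lmonos (n + r) (laurent_vars n A r)"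
  unfolding lmonos_def laurent_vars_def by auto

lemma ext_strict:
  assumes "A \<subseteq> {..<n}" "mono_ideal n A I" "mono_ideal n A J" "J \<subset> I"
  shows "ext_ideal n A r J \<subset> ext_ideal n A r I"
proof -
  obtain u where u: "u \<in> I" "u \<notin> J" using assms(4) by auto
  have ul: "u \<in> lmonos n A" using u ideal_sub[OF assms(2)] by auto
  have "ext_ideal n A r J \<subseteq> ext_ideal n A r I"
    unfolding ext_char[OF assms(1,2)] ext_char[OF assms(1,3)] using assms(4) by auto
  moreover have "u \<in> ext_ideal n A r I" "u \<notin> ext_ideal n A r J"
    unfolding ext_char[OF assms(1,2)] ext_char[OF assms(1,3)]
    using u trunc_id[OF ul] lmonos_widen[OF ul] by auto
  ultimately show ?thesis by blast
qed

lemma ext_Suc: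
  assumes "A \<subseteq> {..<n}" "mono_ideal n A I"
  shows "ext_ideal n A (Suc r) I = ext_ideal (n + r) (laurent_vars n A r) 1 (ext_ideal n A r I)"
proof -
  have A': "laurent_vars n A r \<subseteq> {..<n + r}" using assms(1) unfolding laurent_vars_def by auto
  have L: "laurent_vars (n + r) (laurent_vars n A r) 1 = laurent_vars n A (Suc r)"
    unfolding laurent_vars_def by auto
  have tt: "trunc n (trunc (n + r) v) = trunc n v" for v unfolding trunc_def by auto
  have tl: "v \<in> lmonos (n + Suc r) (laurent_vars n A (Suc r)) \<Longrightarrow> trunc (n + r) v \<in> lmonos (n + r) (laurent_vars n A r)" for v
    unfolding lmonos_def laurent_vars_def trunc_def by auto
  show ?thesis
  proof (intro set_eqI)
    fix v
    have "v \<in> ext_ideal (n + r) (laurent_vars n A r) 1 (ext_ideal n A r I) \<longleftrightarrow>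
       v \<in> lmonos (n + Suc r) (laurent_vars n A (Suc r)) \<and>
       (trunc (n + r) v \<in> lmonos (n + r) (laurent_vars n A r) \<and> trunc n (trunc (n + r) v) \<in> I)"
      unfolding ext_char[OF A' ext_mono[OF assms]] unfolding ext_char[OF assms] L by simp
    also have "\<dots> \<longleftrightarrow> v \<in> ext_ideal n A (Suc r) I"
      unfolding ext_char[OF assms] tt using tl by blast
    finally show "v \<in> ext_ideal n A (Suc r) I \<longleftrightarrow> v \<in> ext_ideal (n + r) (laurent_vars n A r) 1 (ext_ideal n A r I)"
      by blast
  qed
qed

lemma ext_liftL:
  assumes "A \<subseteq> {..<n}" "mono_ideal n A I" "mono_ideal n A J"
  shows "ext_ideal n A 1 I - ext_ideal n A 1 J = liftL n A (I - J)"
proof -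
  have L: "laurent_vars n A 1 = insert n A" unfolding laurent_vars_def by auto
  have t: "v \<in> lmonos (Suc n) (insert n A) \<Longrightarrow> trunc n v = v(n:=0)" for v
    unfolding trunc_def lmonos_def by (auto simp: fun_eq_iff)
  show ?thesis unfolding ext_char[OF assms(1,2)] ext_char[OF assms(1,3)] L liftL_def
    using t by auto
qed

lemma liftL_slice:
  assumes "M \<subseteq> lmonos n A"
  shows "{v \<in> liftL n A M. v n = 0} = M"
proof (intro set_eqI iffI)
  fix v assume "v \<in> {v \<in> liftL n A M. v n = 0}"
  then show "v \<in> M" unfolding liftL_def by (auto simp: fun_upd_idem)
next
  fix v assume v: "v \<in> M"
  then have vl: "v \<in> lmonos n A" using assms by auto
  have "v \<in> lmonos (Suc n) (insert n A)" by (rule lmonos_mono_n[OF vl]) auto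
  then show "v \<in> {v \<in> liftL n A M. v n = 0}" unfolding liftL_def using v lmonos_n0[OF vl] by (auto simp: fun_upd_idem)
qed

lemma step1:
  assumes "A \<subseteq> {..<n}" "mono_ideal n A I" "mono_ideal n A J" "J \<subset> I"
  shows "sdepth (n + 1) (laurent_vars n A 1) (ext_ideal n A 1 I) (ext_ideal n A 1 J) = sdepth n A I J + enat 1"
proof -
  have L: "laurent_vars n A 1 = insert n A" unfolding laurent_vars_def by auto
  have E: "ext_ideal n A 1 I - ext_ideal n A 1 J = liftL n A (I - J)" by (rule ext_liftL[OF assms(1-3)])
  have Msub: "I - J \<subseteq> lmonos n A" using ideal_sub[OF assms(2)] by auto
  have Mne: "I - J \<noteq> {}" using assms(4) by auto
  obtain Ds where Ds: "decomp n A (I - J) Ds" "sdepth n A I J = enat (sdepth_decomp Ds)"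
    using sdepth_attained[OF Mne exists_decomp[OF assms(1-3)]] by blast
  have LHS: "sdepth (n + 1) (laurent_vars n A 1) (ext_ideal n A 1 I) (ext_ideal n A 1 J) =
     (SUP D\<in>{D. decomp (Suc n) (insert n A) (liftL n A (I - J)) D}. enat (sdepth_decomp D))"
    unfolding sdepth_eq E L by simp
  show ?thesis
  proof (rule antisym)
    show "sdepth (n + 1) (laurent_vars n A 1) (ext_ideal n A 1 I) (ext_ideal n A 1 J) \<le> sdepth n A I J + enat 1"
      unfolding LHS
    proof (rule SUP_least)
      fix D' assume "D' \<in> {D. decomp (Suc n) (insert n A) (liftL n A (I - J)) D}"
      then have D': "decomp (Suc n) (insert n A) (liftL n A (I - J)) D'" by simp
      obtain D where D0: "decomp n A {v \<in> liftL n A (I - J). v n = 0} D"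
        and c: "\<forall>q\<in>D. \<exists>p\<in>D'. card (snd p) \<le> Suc (card (snd q))"
        using decomp_U[OF D'] by blast
      have D: "decomp n A (I - J) D" using D0 unfolding liftL_slice[OF Msub] .
      have finD: "finite D" using D unfolding decomp_def by blast
      have finD': "finite D'" using D' unfolding decomp_def by blast
      obtain q where q: "q \<in> D" "sdepth_decomp D = card (snd q)"
        using sd_in[OF finD decomp_nonempty[OF D Mne]] by blast
      obtain p where p: "p \<in> D'" "card (snd p) \<le> Suc (card (snd q))" using c q(1) by blast
      have "sdepth_decomp D' \<le> Suc (sdepth_decomp D)"
        using sd_le[OF finD' p(1)] p(2) q(2) by linarith
      then have "enat (sdepth_decomp D') \<le> enat (sdepth_decomp D) + enat 1" by simp
      also have "\<dots> \<le> sdepth n A I J + enat 1" using sdepth_upper[OF D] by (rule add_right_mono)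
      finally show "enat (sdepth_decomp D') \<le> sdepth n A I J + enat 1" .
    qed
  next
    obtain D' where D': "decomp (Suc n) (insert n A) (liftL n A (I - J)) D'"
      and c0: "Ds \<noteq> {} \<longrightarrow> sdepth_decomp D' = Suc (sdepth_decomp Ds)"
      using decomp_L[OF Ds(1) Msub] by blast
    have c: "sdepth_decomp D' = Suc (sdepth_decomp Ds)" using c0 decomp_nonempty[OF Ds(1) Mne] by blast
    have "sdepth n A I J + enat 1 = enat (sdepth_decomp D')" using Ds(2) c by simp
    also have "\<dots> \<le> sdepth (n + 1) (laurent_vars n A 1) (ext_ideal n A 1 I) (ext_ideal n A 1 J)"
      unfolding LHS by (rule SUP_upper) (use D' in auto)
    finally show "sdepth n A I J + enat 1 \<le> sdepth (n + 1) (laurent_vars n A 1) (ext_ideal n A 1 I) (ext_ideal n A 1 J)" .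
  qed
qed

theorem corollary4p2:
  fixes n r :: nat and A :: "nat set" and I J :: "(nat \<Rightarrow> int) set"
  assumes "A \<subseteq> {..<n}"
    and "mono_ideal n A I" and "mono_ideal n A J" and "J \<subset> I"
  shows "sdepth (n + r) (laurent_vars n A r) (ext_ideal n A r I) (ext_ideal n A r J)
         = sdepth n A I J + enat r"
proof (induction r)
  case 0
  have lv: "laurent_vars n A 0 = A" by (simp add: laurent_vars_def)
  have e: "ext_ideal n A 0 K = K" if "mono_ideal n A K" for K
  proof (intro set_eqI)
    fix v
    have "v \<in> ext_ideal n A 0 K \<longleftrightarrow> v \<in> lmonos n A \<and> trunc n v \<in> K"
      unfolding ext_char[OF assms(1) that] lv by simp
    also have "\<dots> \<longleftrightarrow> v \<in> K"
      using ideal_sub[OF that] trunc_id[of v n A] by (cases "v \<in> lmonos n A") auto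
    finally show "v \<in> ext_ideal n A 0 K \<longleftrightarrow> v \<in> K" .
  qed
  have "sdepth (n + 0) (laurent_vars n A 0) (ext_ideal n A 0 I) (ext_ideal n A 0 J) = sdepth n A I J"
    unfolding e[OF assms(2)] e[OF assms(3)] lv by simp
  then show ?case by (simp add: zero_enat_def[symmetric])
next
  case (Suc r)
  have A': "laurent_vars n A r \<subseteq> {..<n + r}" using assms(1) unfolding laurent_vars_def by auto
  have L: "laurent_vars (n + r) (laurent_vars n A r) 1 = laurent_vars n A (Suc r)"
    unfolding laurent_vars_def by auto
  have "sdepth (n + Suc r) (laurent_vars n A (Suc r)) (ext_ideal n A (Suc r) I) (ext_ideal n A (Suc r) J)
      = sdepth (n + r + 1) (laurent_vars (n + r) (laurent_vars n A r) 1)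
          (ext_ideal (n + r) (laurent_vars n A r) 1 (ext_ideal n A r I))
          (ext_ideal (n + r) (laurent_vars n A r) 1 (ext_ideal n A r J))"
    unfolding L ext_Suc[OF assms(1,2)] ext_Suc[OF assms(1,3)] by simp
  also have "\<dots> = sdepth (n + r) (laurent_vars n A r) (ext_ideal n A r I) (ext_ideal n A r J) + enat 1"
    by (rule step1[OF A' ext_mono[OF assms(1,2)] ext_mono[OF assms(1,3)] ext_strict[OF assms]])
  also have "\<dots> = sdepth n A I J + enat (Suc r)"
    unfolding Suc.IH by (simp add: add.assoc)
  finally show ?case .
qed

end
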